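(* An elementary pair $M\prec N$ of models of Presburger arithmetic is stably embedded if and only if $N$ is an end-extension of $M$. In particular, the class of stably embedded pairs of models of Presburger arithmetic is elementary in the language of pairs $\mathcal L_P$.
   Context: The pair $M\prec N$ is stably embedded if for every $\mathcal L(N)$-definable $X\subseteq N^n$, $X\cap M^n$ is $\mathcal L(M)$-definable. $N$ is an end-extension of $M$ if no element of $N\setminus M$ lies between two elements of $M$ (every element of $N\setminus M$ is above all of $M$ or below all of $M$). $\mathcal L_P$ extends the Presburger language by a unary predicate $P$ interpreted as $M$. *)

theory Defs
  imports Main
begin

text \<open>The constructor PP is the extra unary
  predicate of the pair language L_P; an L-formula is one not using PP.\<close>

datatype ptm = PVar nat | PZero | POne | PAdd ptm ptm | PNeg ptm

datatype pfm = PEq ptm ptm | PLess ptm ptm | PP ptm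
  | PNot pfm | PAnd pfm pfm | PEx nat pfm

record 'a pstruct =
  pdom :: "'a set"
  padd :: "'a \<Rightarrow> 'a \<Rightarrow> 'a"
  pneg :: "'a \<Rightarrow> 'a"
  pzero :: 'a
  pone :: 'a
  pless :: "'a \<Rightarrow> 'a \<Rightarrow> bool"

fun tvars :: "ptm \<Rightarrow> nat set" where
  "tvars (PVar i) = {i}"
| "tvars PZero = {}"
| "tvars POne = {}"
| "tvars (PAdd s t) = tvars s \<union> tvars t"
| "tvars (PNeg t) = tvars t"

fun fv :: "pfm \<Rightarrow> nat set" where
  "fv (PEq s t) = tvars s \<union> tvars t"
| "fv (PLess s t) = tvars s \<union> tvars t"
| "fv (PP t) = tvars t"
| "fv (PNot f) = fv f"
| "fv (PAnd f g) = fv f \<union> fv g"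
| "fv (PEx i f) = fv f - {i}"

fun pure :: "pfm \<Rightarrow> bool" where
  "pure (PEq s t) = True"
| "pure (PLess s t) = True"
| "pure (PP t) = False"
| "pure (PNot f) = pure f"
| "pure (PAnd f g) = (pure f \<and> pure g)"
| "pure (PEx i f) = pure f"

fun teval :: "'a pstruct \<Rightarrow> (nat \<Rightarrow> 'a) \<Rightarrow> ptm \<Rightarrow> 'a" where
  "teval S e (PVar i) = e i"
| "teval S e PZero = pzero S"
| "teval S e POne = pone S"
| "teval S e (PAdd s t) = padd S (teval S e s) (teval S e t)"
| "teval S e (PNeg t) = pneg S (teval S e t)"

fun sat :: "'a pstruct \<Rightarrow> 'a set \<Rightarrow> (nat \<Rightarrow> 'a) \<Rightarrow> pfm \<Rightarrow> bool" where
  "sat S P e (PEq s t) = (teval S e s = teval S e t)"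
| "sat S P e (PLess s t) = pless S (teval S e s) (teval S e t)"
| "sat S P e (PP t) = (teval S e t \<in> P)"
| "sat S P e (PNot f) = (\<not> sat S P e f)"
| "sat S P e (PAnd f g) = (sat S P e f \<and> sat S P e g)"
| "sat S P e (PEx i f) = (\<exists>x\<in>pdom S. sat S P (e(i := x)) f)"

definition is_pstruct :: "'a pstruct \<Rightarrow> bool" where
  "is_pstruct S \<longleftrightarrow> pdom S \<noteq> {} \<and> pzero S \<in> pdom S \<and> pone S \<in> pdom S
     \<and> (\<forall>x\<in>pdom S. \<forall>y\<in>pdom S. padd S x y \<in> pdom S)
     \<and> (\<forall>x\<in>pdom S. pneg S x \<in> pdom S)"

definition Zstruct :: "int pstruct" where
  "Zstruct = \<lparr>pdom = UNIV, padd = (+), pneg = uminus, pzero = 0, pone = 1, pless = (<)\<rparr>"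

text \<open>A model of Presburger arithmetic: a structure satisfying exactly the L-sentences
  true in Z, i.e. a model of the complete theory Th(Z,+,-,0,1,<).\<close>
definition presburger_model :: "'a pstruct \<Rightarrow> bool" where
  "presburger_model S \<longleftrightarrow> is_pstruct S \<and>
     (\<forall>\<phi>. pure \<phi> \<and> fv \<phi> = {} \<longrightarrow>
        ((\<forall>e. range e \<subseteq> pdom S \<longrightarrow> sat S {} e \<phi>) \<longleftrightarrow> sat Zstruct {} (\<lambda>_. 0) \<phi>))"

definition restr :: "'a pstruct \<Rightarrow> 'a set \<Rightarrow> 'a pstruct" where
  "restr S M = S\<lparr>pdom := M\<rparr>"

definition elem_sub :: "'a set \<Rightarrow> 'a pstruct \<Rightarrow> bool" where
  "elem_sub M N \<longleftrightarrow> M \<subseteq> pdom N \<and> is_pstruct (restr N M) \<and>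
     (\<forall>\<phi> e. pure \<phi> \<and> range e \<subseteq> M \<longrightarrow> (sat (restr N M) {} e \<phi> \<longleftrightarrow> sat N {} e \<phi>))"

definition presburger_pair :: "'a set \<Rightarrow> 'a pstruct \<Rightarrow> bool" where
  "presburger_pair M N \<longleftrightarrow> presburger_model N \<and> presburger_model (restr N M) \<and> elem_sub M N"

text \<open>Definability with parameters from A: n-tuples are lists of length n; the formula's
  variables 0..n-1 are the tuple coordinates, variables n..n+k-1 the parameters.\<close>
definition definable :: "'a pstruct \<Rightarrow> 'a set \<Rightarrow> nat \<Rightarrow> 'a list set \<Rightarrow> bool" where
  "definable S A n X \<longleftrightarrow> (\<exists>\<phi> ps. pure \<phi> \<and> set ps \<subseteq> A \<and> fv \<phi> \<subseteq> {..<n + length ps} \<and>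
     X = {xs. length xs = n \<and> set xs \<subseteq> pdom S \<and> sat S {} (\<lambda>i. (xs @ ps) ! i) \<phi>})"

definition stably_embedded :: "'a set \<Rightarrow> 'a pstruct \<Rightarrow> bool" where
  "stably_embedded M N \<longleftrightarrow> (\<forall>n X. definable N (pdom N) n X \<longrightarrow>
     definable (restr N M) M n {xs \<in> X. set xs \<subseteq> M})"

definition end_extension :: "'a set \<Rightarrow> 'a pstruct \<Rightarrow> bool" where
  "end_extension M N \<longleftrightarrow> (\<forall>y \<in> pdom N - M. (\<forall>m\<in>M. pless N m y) \<or> (\<forall>m\<in>M. pless N y m))"

end

theory Submission
  imports Defs "HOL-Decision_Procs.Cooper"
begin

hide_const (open) Cooper.T Cooper.F Cooper.A Cooper.E Cooper.C

lemma teval_cong: "(\<forall>i\<in>tvars t. e i = e' i) \<Longrightarrow> teval S e t = teval S e' t"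
  by (induction t) auto

lemma sat_cong: "(\<forall>i\<in>fv \<phi>. e i = e' i) \<Longrightarrow> sat S P e \<phi> = sat S P e' \<phi>"
proof (induction \<phi> arbitrary: e e')
  case (PEq x1 x2) then show ?case using teval_cong[of x1 e e' S] teval_cong[of x2 e e' S] by auto
next
  case (PLess x1 x2) then show ?case using teval_cong[of x1 e e' S] teval_cong[of x2 e e' S] by auto
next
  case (PP x) then show ?case using teval_cong[of x e e' S] by auto
next
  case (PNot f)
  have "sat S P e f = sat S P e' f" by (rule PNot.IH) (use PNot.prems in auto)
  then show ?case by simp
next
  case (PAnd f g)
  have "sat S P e f = sat S P e' f" by (rule PAnd.IH(1)) (use PAnd.prems in auto)
  moreover have "sat S P e g = sat S P e' g" by (rule PAnd.IH(2)) (use PAnd.prems in auto)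
  ultimately show ?case by simp
next
  case (PEx i f)
  have "\<And>x. sat S P (e(i:=x)) f = sat S P (e'(i:=x)) f"
    by (rule PEx.IH) (use PEx.prems in auto)
  then show ?case by simp
qed

lemma finite_tvars: "finite (tvars t)" by (induction t) auto
lemma finite_fv: "finite (fv \<phi>)" by (induction \<phi>) (auto simp: finite_tvars)

fun rtm :: "(nat \<Rightarrow> nat) \<Rightarrow> ptm \<Rightarrow> ptm" where
  "rtm f (PVar i) = PVar (f i)"
| "rtm f PZero = PZero"
| "rtm f POne = POne"
| "rtm f (PAdd s t) = PAdd (rtm f s) (rtm f t)"
| "rtm f (PNeg t) = PNeg (rtm f t)"

fun rfm :: "(nat \<Rightarrow> nat) \<Rightarrow> pfm \<Rightarrow> pfm" where
  "rfm f (PEq s t) = PEq (rtm f s) (rtm f t)"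
| "rfm f (PLess s t) = PLess (rtm f s) (rtm f t)"
| "rfm f (PP t) = PP (rtm f t)"
| "rfm f (PNot g) = PNot (rfm f g)"
| "rfm f (PAnd g h) = PAnd (rfm f g) (rfm f h)"
| "rfm f (PEx i g) = PEx (f i) (rfm f g)"

lemma teval_rtm: "teval S e (rtm f t) = teval S (e \<circ> f) t"
  by (induction t) auto

lemma tvars_rtm: "tvars (rtm f t) = f ` tvars t"
  by (induction t) auto

lemma sat_rfm: "inj f \<Longrightarrow> sat S P e (rfm f \<phi>) = sat S P (e \<circ> f) \<phi>"
proof (induction \<phi> arbitrary: e)
  case (PEx i g)
  have "\<And>x. (e(f i := x)) \<circ> f = (e \<circ> f)(i := x)"
    using PEx.prems by (auto simp: fun_eq_iff inj_eq)
  then have h: "\<And>x. sat S P (e(f i := x)) (rfm f g) = sat S P ((e \<circ> f)(i := x)) g"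
    using PEx.IH[OF PEx.prems] by metis
  show ?case by (simp only: rfm.simps sat.simps h)
qed (auto simp: teval_rtm)

lemma pure_rfm: "pure (rfm f \<phi>) = pure \<phi>"
  by (induction \<phi>) auto

lemma fv_rfm: "inj f \<Longrightarrow> fv (rfm f \<phi>) = f ` fv \<phi>"
  by (induction \<phi>) (auto simp: tvars_rtm image_set_diff image_Un)


lemma Z_simps: "pdom Zstruct = UNIV" "padd Zstruct = (+)" "pneg Zstruct = uminus"
  "pzero Zstruct = 0" "pone Zstruct = 1" "pless Zstruct = (<)"
  by (auto simp: Zstruct_def)

section \<open>Translation to Cooper syntax\<close>

fun trt :: "(nat \<Rightarrow> nat) \<Rightarrow> ptm \<Rightarrow> Cooper.num" where
  "trt r (PVar i) = Bound (r i)"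
| "trt r PZero = Cooper.C 0"
| "trt r POne = Cooper.C 1"
| "trt r (PAdd s t) = Cooper.Add (trt r s) (trt r t)"
| "trt r (PNeg t) = Cooper.Neg (trt r t)"

fun trf :: "(nat \<Rightarrow> nat) \<Rightarrow> pfm \<Rightarrow> Cooper.fm" where
  "trf r (PEq s t) = Cooper.Eq (Cooper.Sub (trt r s) (trt r t))"
| "trf r (PLess s t) = Cooper.Lt (Cooper.Sub (trt r s) (trt r t))"
| "trf r (PP t) = Cooper.F"
| "trf r (PNot f) = Cooper.Not (trf r f)"
| "trf r (PAnd f g) = Cooper.And (trf r f) (trf r g)"
| "trf r (PEx i f) = Cooper.E (trf (\<lambda>j. if j = i then 0 else Suc (r j)) f)"

lemma Inum_trt: "Inum bs (trt r t) = teval Zstruct (\<lambda>j. bs ! r j) t"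
  by (induction t) (auto simp: Z_simps)

lemma Ifm_trf: "pure \<phi> \<Longrightarrow> Ifm bbs bs (trf r \<phi>) = sat Zstruct {} (\<lambda>j. bs ! r j) \<phi>"
proof (induction \<phi> arbitrary: r bs)
  case (PEx i f)
  have "\<And>x. (\<lambda>j. (x # bs) ! (if j = i then 0 else Suc (r j))) = (\<lambda>j. bs ! r j)(i := x)"
    by (auto simp: fun_eq_iff)
  then show ?case using PEx by (simp add: Z_simps)
qed (auto simp: Inum_trt Z_simps)

fun nsm :: "nat \<Rightarrow> ptm \<Rightarrow> ptm" where
  "nsm 0 t = PZero" | "nsm (Suc k) t = PAdd t (nsm k t)"

definition ism :: "int \<Rightarrow> ptm \<Rightarrow> ptm" where
  "ism c t = (if 0 \<le> c then nsm (nat c) t else PNeg (nsm (nat (- c)) t))"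

fun nsmul :: "'a pstruct \<Rightarrow> nat \<Rightarrow> 'a \<Rightarrow> 'a" where
  "nsmul S 0 a = pzero S" | "nsmul S (Suc k) a = padd S a (nsmul S k a)"

lemma teval_nsm: "teval S e (nsm k t) = nsmul S k (teval S e t)"
  by (induction k) auto

lemma nsmul_Z: "nsmul Zstruct k a = int k * a"
  by (induction k) (auto simp: Z_simps algebra_simps)

lemma teval_ism_Z: "teval Zstruct e (ism c t) = c * teval Zstruct e t"
  by (auto simp: ism_def teval_nsm nsmul_Z Z_simps)

lemma tvars_nsm: "tvars (nsm k t) \<subseteq> tvars t"
  by (induction k) auto

lemma tvars_ism: "tvars (ism c t) \<subseteq> tvars t"
  using tvars_nsm by (auto simp: ism_def)

definition vx :: "nat \<Rightarrow> nat \<Rightarrow> ptm" where "vx n j = (if j < n then PVar j else PZero)"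
definition vp :: "nat \<Rightarrow> nat \<Rightarrow> ptm" where "vp n j = (if j < n then PZero else PVar j)"

fun bx :: "nat \<Rightarrow> Cooper.num \<Rightarrow> ptm" where
  "bx n (Cooper.C c) = ism c POne"
| "bx n (Bound j) = vx n j"
| "bx n (CN j c a) = PAdd (ism c (vx n j)) (bx n a)"
| "bx n (Cooper.Neg a) = PNeg (bx n a)"
| "bx n (Cooper.Add a b) = PAdd (bx n a) (bx n b)"
| "bx n (Cooper.Sub a b) = PAdd (bx n a) (PNeg (bx n b))"
| "bx n (Cooper.Mul c a) = ism c (bx n a)"

fun bp :: "nat \<Rightarrow> Cooper.num \<Rightarrow> ptm" where
  "bp n (Cooper.C c) = PZero"
| "bp n (Bound j) = vp n j"
| "bp n (CN j c a) = PAdd (ism c (vp n j)) (bp n a)"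
| "bp n (Cooper.Neg a) = PNeg (bp n a)"
| "bp n (Cooper.Add a b) = PAdd (bp n a) (bp n b)"
| "bp n (Cooper.Sub a b) = PAdd (bp n a) (PNeg (bp n b))"
| "bp n (Cooper.Mul c a) = ism c (bp n a)"

lemma bxbp_Z: "teval Zstruct (\<lambda>j. bs ! j) (bx n t) + teval Zstruct (\<lambda>j. bs ! j) (bp n t) = Inum bs t"
proof (induction t)
  case (Mul c a) then show ?case by (simp add: Z_simps teval_ism_Z) (metis distrib_left)
qed (auto simp: Z_simps teval_ism_Z vx_def vp_def algebra_simps)

lemma tvars_bx: "tvars (bx n t) \<subseteq> {..<n}"
proof (induction t)
  case (CN j c a) then show ?case using tvars_ism[of c "vx n j"] by (auto simp: vx_def split: if_splits)
next
  case (Mul c a) then show ?case using tvars_ism[of c "bx n a"] by auto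
next
  case (C c) then show ?case using tvars_ism[of c POne] by auto
qed (auto simp: vx_def)

lemma tvars_bp: "tvars (bp n t) \<subseteq> {n..}"
proof (induction t)
  case (CN j c a) then show ?case using tvars_ism[of c "vp n j"] by (auto simp: vp_def split: if_splits)
next
  case (Mul c a) then show ?case using tvars_ism[of c "bp n a"] by auto
qed (auto simp: vp_def)

fun mxv :: "ptm \<Rightarrow> nat" where
  "mxv (PVar i) = i" | "mxv PZero = 0" | "mxv POne = 0"
| "mxv (PAdd s t) = max (mxv s) (mxv t)" | "mxv (PNeg t) = mxv t"

lemma mxv: "i \<in> tvars t \<Longrightarrow> i \<le> mxv t"
  by (induction t) auto

definition dvdf :: "nat \<Rightarrow> ptm \<Rightarrow> pfm" where
  "dvdf k u = PEx (Suc (mxv u)) (PEq (nsm k (PVar (Suc (mxv u)))) u)"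

lemma sat_dvdf: "sat S P e (dvdf k u) = (\<exists>y\<in>pdom S. nsmul S k y = teval S e u)"
proof -
  have "\<And>y. teval S (e(Suc (mxv u) := y)) u = teval S e u"
    by (rule teval_cong) (auto dest: mxv)
  then show ?thesis by (simp add: dvdf_def teval_nsm)
qed

lemma fv_dvdf: "fv (dvdf k u) \<subseteq> tvars u"
  using tvars_nsm[of k "PVar (Suc (mxv u))"] by (auto simp: dvdf_def)

lemma pure_dvdf: "pure (dvdf k u)"
  by (simp add: dvdf_def)

definition ptrue :: pfm where "ptrue = PEq PZero PZero"
definition sp :: "nat \<Rightarrow> Cooper.num \<Rightarrow> ptm" where "sp n t = PAdd (bx n t) (bp n t)"
definition pdvd :: "nat \<Rightarrow> int \<Rightarrow> Cooper.num \<Rightarrow> pfm" where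
  "pdvd n i t = (if i = 0 then PEq (sp n t) PZero else dvdf (nat \<bar>i\<bar>) (sp n t))"
definition PImp :: "pfm \<Rightarrow> pfm \<Rightarrow> pfm" where "PImp p q = PNot (PAnd p (PNot q))"
definition PIff :: "pfm \<Rightarrow> pfm \<Rightarrow> pfm" where "PIff p q = PAnd (PImp p q) (PImp q p)"
definition PAll :: "nat \<Rightarrow> pfm \<Rightarrow> pfm" where "PAll i p = PNot (PEx i (PNot p))"

lemma sat_PImp[simp]: "sat S P e (PImp p q) = (sat S P e p \<longrightarrow> sat S P e q)"
  by (simp add: PImp_def)
lemma sat_PIff[simp]: "sat S P e (PIff p q) = (sat S P e p \<longleftrightarrow> sat S P e q)"
  by (auto simp add: PIff_def)
lemma sat_PAll[simp]: "sat S P e (PAll i p) = (\<forall>x\<in>pdom S. sat S P (e(i:=x)) p)"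
  by (simp add: PAll_def)
lemma sat_ptrue[simp]: "sat S P e ptrue" by (simp add: ptrue_def)
lemma pure_simps[simp]: "pure ptrue" "pure (PImp p q) = (pure p \<and> pure q)"
  "pure (PIff p q) = (pure p \<and> pure q)" "pure (PAll i p) = pure p"
  by (auto simp: ptrue_def PImp_def PIff_def PAll_def)
lemma fv_simps[simp]: "fv ptrue = {}" "fv (PImp p q) = fv p \<union> fv q"
  "fv (PIff p q) = fv p \<union> fv q" "fv (PAll i p) = fv p - {i}"
  by (auto simp: ptrue_def PImp_def PIff_def PAll_def)

fun backf :: "nat \<Rightarrow> Cooper.fm \<Rightarrow> pfm" where
  "backf n Cooper.T = ptrue"
| "backf n Cooper.F = PNot ptrue"
| "backf n (Cooper.Lt t) = PLess (sp n t) PZero"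
| "backf n (Cooper.Gt t) = PLess PZero (sp n t)"
| "backf n (Cooper.Le t) = PNot (PLess PZero (sp n t))"
| "backf n (Cooper.Ge t) = PNot (PLess (sp n t) PZero)"
| "backf n (Cooper.Eq t) = PEq (sp n t) PZero"
| "backf n (Cooper.NEq t) = PNot (PEq (sp n t) PZero)"
| "backf n (Cooper.Dvd i t) = pdvd n i t"
| "backf n (Cooper.NDvd i t) = PNot (pdvd n i t)"
| "backf n (Cooper.Not p) = PNot (backf n p)"
| "backf n (Cooper.And p q) = PAnd (backf n p) (backf n q)"
| "backf n (Cooper.Or p q) = PNot (PAnd (PNot (backf n p)) (PNot (backf n q)))"
| "backf n (Cooper.Imp p q) = PImp (backf n p) (backf n q)"
| "backf n (Cooper.Iff p q) = PAnd (PImp (backf n p) (backf n q)) (PImp (backf n q) (backf n p))"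
| "backf n (Cooper.E p) = ptrue"
| "backf n (Cooper.A p) = ptrue"
| "backf n (Cooper.Closed k) = (if ([]::bool list) ! k then ptrue else PNot ptrue)"
| "backf n (Cooper.NClosed k) = (if ([]::bool list) ! k then PNot ptrue else ptrue)"

lemma pure_backf: "pure (backf n p)"
  by (induction p) (auto simp: pdvd_def pure_dvdf)

lemma teval_sp_Z: "teval Zstruct (\<lambda>j. bs ! j) (sp n t) = Inum bs t"
  using bxbp_Z[of bs n t] by (simp add: sp_def Z_simps)

lemma dvd_ex: "(i::int) \<noteq> 0 \<Longrightarrow> (i dvd v) = (\<exists>y. \<bar>i\<bar> * y = v)"
  by (metis abs_dvd_iff dvd_def mult.commute)

lemma sat_pdvd_Z: "sat Zstruct {} (\<lambda>j. bs ! j) (pdvd n i t) = (i dvd Inum bs t)"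
  by (auto simp: pdvd_def sat_dvdf nsmul_Z Z_simps teval_sp_Z dvd_ex)

lemma backf_Z: "qfree p \<Longrightarrow> sat Zstruct {} (\<lambda>j. bs ! j) (backf n p) = Ifm [] bs p"
  by (induction p) (auto simp: teval_sp_Z sat_pdvd_Z Z_simps)


section \<open>Transfer from Z to models\<close>

lemma closure_elim: "range e \<subseteq> pdom S \<Longrightarrow> sat S P e (foldr PAll vs \<phi>) \<Longrightarrow> sat S P e \<phi>"
proof (induction vs)
  case (Cons v vs)
  have "e v \<in> pdom S" using Cons.prems(1) by auto
  moreover have "\<forall>x\<in>pdom S. sat S P (e(v := x)) (foldr PAll vs \<phi>)" using Cons.prems(2) by simp
  ultimately have "sat S P (e(v := e v)) (foldr PAll vs \<phi>)" by blast
  then have "sat S P e (foldr PAll vs \<phi>)" by simp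
  then show ?case using Cons.IH Cons.prems(1) by simp
qed simp

lemma closure_Z: "(\<forall>e. sat Zstruct P e \<phi>) \<Longrightarrow> sat Zstruct P e (foldr PAll vs \<phi>)"
  by (induction vs arbitrary: e) (auto simp: Z_simps)

lemma fv_closure: "fv (foldr PAll vs \<phi>) = fv \<phi> - set vs"
  by (induction vs) auto

lemma pure_closure: "pure (foldr PAll vs \<phi>) = pure \<phi>"
  by (induction vs) auto

lemma transfer:
  assumes "presburger_model S" "pure \<phi>" "\<forall>e. sat Zstruct {} e \<phi>" "range e \<subseteq> pdom S"
  shows "sat S {} e \<phi>"
proof -
  obtain vs where vs: "set vs = fv \<phi>" using finite_list[OF finite_fv] by metis
  let ?c = "foldr PAll vs \<phi>"
  have c: "pure ?c" "fv ?c = {}" using assms(2) vs by (auto simp: pure_closure fv_closure)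
  have "sat Zstruct {} (\<lambda>_. 0) ?c" by (rule closure_Z) (use assms in auto)
  hence "\<forall>e. range e \<subseteq> pdom S \<longrightarrow> sat S {} e ?c" using assms(1) c unfolding presburger_model_def by simp
  thus ?thesis using closure_elim assms(4) by metis
qed

lemma pm_struct: "presburger_model S \<Longrightarrow> is_pstruct S"
  by (simp add: presburger_model_def)

lemma struct_simps:
  assumes "is_pstruct S"
  shows "pzero S \<in> pdom S" "pone S \<in> pdom S" "x \<in> pdom S \<Longrightarrow> y \<in> pdom S \<Longrightarrow> padd S x y \<in> pdom S"
    "x \<in> pdom S \<Longrightarrow> pneg S x \<in> pdom S"
  using assms by (auto simp: is_pstruct_def)

lemma transfer0:
  assumes "presburger_model S" "pure \<phi>" "\<forall>e. sat Zstruct {} e \<phi>"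
  shows "sat S {} (\<lambda>_. pzero S) \<phi>"
  by (rule transfer[OF assms]) (use struct_simps(1)[OF pm_struct[OF assms(1)]] in auto)

section \<open>Laws of Presburger models\<close>

context
  fixes S :: "'a pstruct"
  assumes PS: "presburger_model S"
begin

lemma law_lt:
  "\<forall>a\<in>pdom S. \<forall>b\<in>pdom S. pless S (padd S a b) (pzero S) = pless S a (pneg S b)"
proof -
  have "sat S {} (\<lambda>_. pzero S) (PAll 0 (PAll 1 (PIff (PLess (PAdd (PVar 0) (PVar 1)) PZero) (PLess (PVar 0) (PNeg (PVar 1))))))"
    by (rule transfer0[OF PS]) (simp, auto simp: Z_simps)
  from this[simplified] show ?thesis by blast
qed

lemma law_gt:
  "\<forall>a\<in>pdom S. \<forall>b\<in>pdom S. pless S (pzero S) (padd S a b) = pless S (pneg S b) a"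
proof -
  have "sat S {} (\<lambda>_. pzero S) (PAll 0 (PAll 1 (PIff (PLess PZero (PAdd (PVar 0) (PVar 1))) (PLess (PNeg (PVar 1)) (PVar 0)))))"
    by (rule transfer0[OF PS]) (simp, auto simp: Z_simps)
  from this[simplified] show ?thesis by blast
qed

lemma law_negneg: "\<forall>a\<in>pdom S. pneg S (pneg S a) = a"
proof -
  have "sat S {} (\<lambda>_. pzero S) (PAll 0 (PEq (PNeg (PNeg (PVar 0))) (PVar 0)))"
    by (rule transfer0[OF PS]) (simp, auto simp: Z_simps)
  from this[simplified] show ?thesis by blast
qed

lemma law_asym: "\<forall>a\<in>pdom S. \<forall>b\<in>pdom S. \<not> (pless S a b \<and> pless S b a)"
proof -
  have "sat S {} (\<lambda>_. pzero S) (PAll 0 (PAll 1 (PNot (PAnd (PLess (PVar 0) (PVar 1)) (PLess (PVar 1) (PVar 0))))))"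
    by (rule transfer0[OF PS]) (simp, auto simp: Z_simps)
  from this[simplified] show ?thesis by blast
qed

lemma law_sum0: "\<forall>a\<in>pdom S. \<forall>b\<in>pdom S. padd S a b = pzero S \<longrightarrow> b = pneg S a"
proof -
  have "sat S {} (\<lambda>_. pzero S) (PAll 0 (PAll 1 (PImp (PEq (PAdd (PVar 0) (PVar 1)) PZero) (PEq (PVar 1) (PNeg (PVar 0))))))"
    by (rule transfer0[OF PS]) (simp, auto simp: Z_simps)
  from this[simplified] show ?thesis by blast
qed

lemma law_trich: "\<forall>a\<in>pdom S. \<forall>b\<in>pdom S. pless S a b \<or> a = b \<or> pless S b a"
proof -
  have "sat S {} (\<lambda>_. pzero S) (PAll 0 (PAll 1 (PNot (PAnd (PNot (PLess (PVar 0) (PVar 1))) (PAnd (PNot (PEq (PVar 0) (PVar 1))) (PNot (PLess (PVar 1) (PVar 0))))))))"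
    by (rule transfer0[OF PS]) (simp, auto simp: Z_simps)
  from this[simplified] show ?thesis by blast
qed

lemma law_trans: "\<forall>a\<in>pdom S. \<forall>b\<in>pdom S. \<forall>c\<in>pdom S. pless S a b \<longrightarrow> pless S b c \<longrightarrow> pless S a c"
proof -
  have "sat S {} (\<lambda>_. pzero S) (PAll 0 (PAll 1 (PAll 2 (PImp (PLess (PVar 0) (PVar 1)) (PImp (PLess (PVar 1) (PVar 2)) (PLess (PVar 0) (PVar 2)))))))"
    by (rule transfer0[OF PS]) (simp, auto simp: Z_simps)
  from this[simplified] show ?thesis by blast
qed

lemma law_succ: "\<forall>a\<in>pdom S. pless S a (padd S a (pone S))"
proof -
  have "sat S {} (\<lambda>_. pzero S) (PAll 0 (PLess (PVar 0) (PAdd (PVar 0) POne)))"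
    by (rule transfer0[OF PS]) (simp, auto simp: Z_simps)
  from this[simplified] show ?thesis by blast
qed

lemma law_discr: "\<forall>a\<in>pdom S. \<forall>b\<in>pdom S. pless S a b \<longrightarrow> pless S (padd S a (pone S)) b \<or> padd S a (pone S) = b"
proof -
  have "sat S {} (\<lambda>_. pzero S) (PAll 0 (PAll 1 (PImp (PLess (PVar 0) (PVar 1)) (PNot (PAnd (PNot (PLess (PAdd (PVar 0) POne) (PVar 1))) (PNot (PEq (PAdd (PVar 0) POne) (PVar 1))))))))"
    by (rule transfer0[OF PS]) (simp, auto simp: Z_simps)
  from this[simplified] show ?thesis by blast
qed

lemma law_mod:
  assumes "0 < k"
  shows "\<forall>b\<in>pdom S. \<exists>a\<in>pdom S. \<not> pless S a (pzero S) \<and> pless S a (nsmul S k (pone S)) \<and>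
    (\<forall>s\<in>pdom S. (\<exists>y\<in>pdom S. nsmul S k y = padd S s b) \<longleftrightarrow> (\<exists>y\<in>pdom S. nsmul S k y = padd S s a))"
proof -
  let ?\<phi> = "PAll 0 (PEx 1 (PAnd (PNot (PLess (PVar 1) PZero)) (PAnd (PLess (PVar 1) (nsm k POne))
     (PAll 2 (PIff (dvdf k (PAdd (PVar 2) (PVar 0))) (dvdf k (PAdd (PVar 2) (PVar 1))))))))"
  have Z: "\<forall>b. \<exists>a. \<not> a < 0 \<and> a < int k \<and> (\<forall>s. (\<exists>y. int k * y = s + b) = (\<exists>y. int k * y = s + a))"
  proof
    fix b :: int
    have "\<forall>s. (\<exists>y. int k * y = s + b) = (\<exists>y. int k * y = s + b mod int k)"
    proof
      fix s :: int
      have "(int k dvd s + b) = (int k dvd s + b mod int k)"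
        by (metis dvd_eq_mod_eq_0 mod_add_right_eq)
      then show "(\<exists>y. int k * y = s + b) = (\<exists>y. int k * y = s + b mod int k)"
        by (metis dvd_def)
    qed
    moreover have kp: "0 < int k" using assms by simp
    moreover have "\<not> b mod int k < 0" using pos_mod_sign[OF kp, of b] by linarith
    moreover have "b mod int k < int k" using pos_mod_bound[OF kp] by simp
    ultimately show "\<exists>a. \<not> a < 0 \<and> a < int k \<and> (\<forall>s. (\<exists>y. int k * y = s + b) = (\<exists>y. int k * y = s + a))"
      by blast
  qed
  have "\<forall>e. sat Zstruct {} e ?\<phi>"
  proof
    fix e
    show "sat Zstruct {} e ?\<phi>"
      using Z by (simp add: Z_simps sat_dvdf nsmul_Z teval_nsm)
  qed
  then have "sat S {} (\<lambda>_. pzero S) ?\<phi>"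
    by (intro transfer0[OF PS]) (simp_all add: pure_dvdf)
  then show ?thesis by (simp add: sat_dvdf teval_nsm)
qed

end

section \<open>Closure properties of definable sets\<close>

lemma definable_sub: "definable S A n X \<Longrightarrow> X \<subseteq> {xs. length xs = n \<and> set xs \<subseteq> pdom S}"
  unfolding definable_def by blast

lemma definable_compl:
  assumes "definable S A n X"
  shows "definable S A n ({xs. length xs = n \<and> set xs \<subseteq> pdom S} - X)"
proof -
  obtain \<phi> ps where h: "pure \<phi>" "set ps \<subseteq> A" "fv \<phi> \<subseteq> {..<n + length ps}"
    "X = {xs. length xs = n \<and> set xs \<subseteq> pdom S \<and> sat S {} (\<lambda>i. (xs @ ps) ! i) \<phi>}"
    using assms unfolding definable_def by blast
  have "{xs. length xs = n \<and> set xs \<subseteq> pdom S} - X =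
     {xs. length xs = n \<and> set xs \<subseteq> pdom S \<and> sat S {} (\<lambda>i. (xs @ ps) ! i) (PNot \<phi>)}"
    unfolding h(4) by auto
  then show ?thesis unfolding definable_def using h(1-3)
    by (intro exI[of _ "PNot \<phi>"] exI[of _ ps]) simp
qed

lemma definable_inter:
  assumes "definable S A n X" "definable S A n Y"
  shows "definable S A n (X \<inter> Y)"
proof -
  obtain \<phi>1 ps1 where h1: "pure \<phi>1" "set ps1 \<subseteq> A" "fv \<phi>1 \<subseteq> {..<n + length ps1}"
    "X = {xs. length xs = n \<and> set xs \<subseteq> pdom S \<and> sat S {} (\<lambda>i. (xs @ ps1) ! i) \<phi>1}"
    using assms(1) unfolding definable_def by blast
  obtain \<phi>2 ps2 where h2: "pure \<phi>2" "set ps2 \<subseteq> A" "fv \<phi>2 \<subseteq> {..<n + length ps2}"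
    "Y = {xs. length xs = n \<and> set xs \<subseteq> pdom S \<and> sat S {} (\<lambda>i. (xs @ ps2) ! i) \<phi>2}"
    using assms(2) unfolding definable_def by blast
  define f where "f j = (if j < n then j else j + length ps1)" for j
  have inj: "inj f" by (auto simp: inj_def f_def split: if_splits)
  have fv2: "fv (rfm f \<phi>2) \<subseteq> {..<n + length (ps1 @ ps2)}"
    using h2(3) by (auto simp: fv_rfm[OF inj] f_def)
  have fv1: "fv (PAnd \<phi>1 (rfm f \<phi>2)) \<subseteq> {..<n + length (ps1 @ ps2)}"
    using h1(3) fv2 by auto
  have e1: "sat S {} (\<lambda>i. (xs @ ps1 @ ps2) ! i) \<phi>1 = sat S {} (\<lambda>i. (xs @ ps1) ! i) \<phi>1"
    if "length xs = n" for xs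
  proof (rule sat_cong, intro ballI)
    fix i assume "i \<in> fv \<phi>1"
    then have "i < n + length ps1" using h1(3) by auto
    then show "(xs @ ps1 @ ps2) ! i = (xs @ ps1) ! i"
      by (metis append_assoc length_append nth_append that)
  qed
  have e2: "sat S {} (\<lambda>i. (xs @ ps1 @ ps2) ! i) (rfm f \<phi>2) = sat S {} (\<lambda>i. (xs @ ps2) ! i) \<phi>2"
    if "length xs = n" for xs
    unfolding sat_rfm[OF inj]
  proof (rule sat_cong, intro ballI)
    fix i assume "i \<in> fv \<phi>2"
    then have "i < n + length ps2" using h2(3) by auto
    then show "((\<lambda>i. (xs @ ps1 @ ps2) ! i) \<circ> f) i = (xs @ ps2) ! i"
      using that by (auto simp: f_def nth_append)
  qed
  have eq: "X \<inter> Y = {xs. length xs = n \<and> set xs \<subseteq> pdom S \<and>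
      sat S {} (\<lambda>i. (xs @ (ps1 @ ps2)) ! i) (PAnd \<phi>1 (rfm f \<phi>2))}"
    unfolding h1(4) h2(4) using e1 e2 by auto
  have "pure (PAnd \<phi>1 (rfm f \<phi>2))" using h1(1) h2(1) by (simp add: pure_rfm)
  moreover have "set (ps1 @ ps2) \<subseteq> A" using h1(2) h2(2) by simp
  ultimately show ?thesis unfolding definable_def using eq fv1 by blast
qed

lemma definable_union:
  assumes "definable S A n X" "definable S A n Y"
  shows "definable S A n (X \<union> Y)"
proof -
  let ?U = "{xs. length xs = n \<and> set xs \<subseteq> pdom S}"
  have "X \<union> Y = ?U - ((?U - X) \<inter> (?U - Y))"
    using definable_sub[OF assms(1)] definable_sub[OF assms(2)] by blast
  moreover have "definable S A n (?U - ((?U - X) \<inter> (?U - Y)))"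
    by (intro definable_compl definable_inter assms)
  ultimately show ?thesis by simp
qed




lemma restr_simps[simp]: "pdom (restr S A) = A" "padd (restr S A) = padd S" "pneg (restr S A) = pneg S"
  "pzero (restr S A) = pzero S" "pone (restr S A) = pone S" "pless (restr S A) = pless S"
  by (auto simp: restr_def)

lemma teval_restr[simp]: "teval (restr S A) e t = teval S e t"
  by (induction t) auto

lemma teval_in: "is_pstruct S \<Longrightarrow> range e \<subseteq> pdom S \<Longrightarrow> teval S e t \<in> pdom S"
  by (induction t) (auto simp: is_pstruct_def)

definition env :: "nat \<Rightarrow> (nat \<Rightarrow> 'a) \<Rightarrow> 'a list \<Rightarrow> nat \<Rightarrow> 'a" where
  "env n F xs = (\<lambda>j. if j < n then xs ! j else F j)"

definition Dset :: "'a set \<Rightarrow> 'a pstruct \<Rightarrow> nat \<Rightarrow> (nat \<Rightarrow> 'a) \<Rightarrow> pfm \<Rightarrow> 'a list set" where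
  "Dset M N n F \<phi> = {xs. length xs = n \<and> set xs \<subseteq> M \<and> sat N {} (env n F xs) \<phi>}"

context
  fixes M :: "'a set" and N :: "'a pstruct"
  assumes pp: "presburger_pair M N"
begin

lemma PN: "presburger_model N" using pp by (simp add: presburger_pair_def)
lemma PM: "presburger_model (restr N M)" using pp by (simp add: presburger_pair_def)
lemma MN: "M \<subseteq> pdom N" using pp by (simp add: presburger_pair_def elem_sub_def)
lemma SM: "is_pstruct (restr N M)" using pm_struct[OF PM] .
lemma SN: "is_pstruct N" using pm_struct[OF PN] .

lemma elem: "pure \<phi> \<Longrightarrow> range e \<subseteq> M \<Longrightarrow> sat (restr N M) {} e \<phi> = sat N {} e \<phi>"
  using pp by (simp add: presburger_pair_def elem_sub_def)

lemma M_zero: "pzero N \<in> M" using struct_simps(1)[OF SM] by simp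
lemma M_one: "pone N \<in> M" using struct_simps(2)[OF SM] by simp
lemma M_add: "a \<in> M \<Longrightarrow> b \<in> M \<Longrightarrow> padd N a b \<in> M" using struct_simps(3)[OF SM] by simp
lemma M_neg: "a \<in> M \<Longrightarrow> pneg N a \<in> M" using struct_simps(4)[OF SM] by simp

lemma teval_M: "range e \<subseteq> M \<Longrightarrow> teval N e t \<in> M"
  using teval_in[OF SM, of e t] by simp

lemma nsmul_M: "a \<in> M \<Longrightarrow> nsmul N k a \<in> M"
  by (induction k) (auto simp: M_zero M_add)

lemma defN:
  assumes "set qs \<subseteq> M" "pure \<chi>" "fv \<chi> \<subseteq> {..<n + length qs}"
  shows "definable (restr N M) M n {xs. length xs = n \<and> set xs \<subseteq> M \<and> sat N {} (\<lambda>i. (xs @ qs) ! i) \<chi>}"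
proof -
  have eq: "sat (restr N M) {} (\<lambda>i. (xs @ qs) ! i) \<chi> = sat N {} (\<lambda>i. (xs @ qs) ! i) \<chi>"
    if "length xs = n" "set xs \<subseteq> M" for xs
  proof -
    define e where "e i = (if i < n + length qs then (xs @ qs) ! i else pzero N)" for i
    have r: "range e \<subseteq> M"
    proof
      fix z assume "z \<in> range e"
      then obtain i where i: "z = e i" by auto
      show "z \<in> M"
      proof (cases "i < n + length qs")
        case True
        then have "(xs @ qs) ! i \<in> set (xs @ qs)" using that(1) by (intro nth_mem) simp
        then show ?thesis using i True that(2) assms(1) by (auto simp: e_def)
      next
        case False then show ?thesis using i M_zero by (simp add: e_def)
      qed
    qed
    have c: "sat S {} (\<lambda>i. (xs @ qs) ! i) \<chi> = sat S {} e \<chi>" for S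
      by (rule sat_cong) (use assms(3) in \<open>auto simp: e_def\<close>)
    show ?thesis using c elem[OF assms(2) r] by simp
  qed
  have "{xs. length xs = n \<and> set xs \<subseteq> M \<and> sat N {} (\<lambda>i. (xs @ qs) ! i) \<chi>} =
        {xs. length xs = n \<and> set xs \<subseteq> pdom (restr N M) \<and> sat (restr N M) {} (\<lambda>i. (xs @ qs) ! i) \<chi>}"
    using eq by auto
  then show ?thesis unfolding definable_def using assms by blast
qed

lemma const_def: "definable (restr N M) M n {xs. length xs = n \<and> set xs \<subseteq> M \<and> c}"
proof -
  have "{xs. length xs = n \<and> set xs \<subseteq> M \<and> c} =
    {xs. length xs = n \<and> set xs \<subseteq> M \<and> sat N {} (\<lambda>i. (xs @ []) ! i) (if c then ptrue else PNot ptrue)}"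
    by auto
  moreover have "definable (restr N M) M n {xs. length xs = n \<and> set xs \<subseteq> M \<and> sat N {} (\<lambda>i. (xs @ []) ! i) (if c then ptrue else PNot ptrue)}"
    by (rule defN) auto
  ultimately show ?thesis by simp
qed

lemma Dnot: "definable (restr N M) M n (Dset M N n F \<phi>) \<Longrightarrow> definable (restr N M) M n (Dset M N n F (PNot \<phi>))"
proof -
  assume a: "definable (restr N M) M n (Dset M N n F \<phi>)"
  have "Dset M N n F (PNot \<phi>) = {xs. length xs = n \<and> set xs \<subseteq> pdom (restr N M)} - Dset M N n F \<phi>"
    by (auto simp: Dset_def)
  then show ?thesis using definable_compl[OF a] by simp
qed

lemma Dand: "definable (restr N M) M n (Dset M N n F \<phi>) \<Longrightarrow> definable (restr N M) M n (Dset M N n F \<psi>) \<Longrightarrow>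
   definable (restr N M) M n (Dset M N n F (PAnd \<phi> \<psi>))"
proof -
  assume a: "definable (restr N M) M n (Dset M N n F \<phi>)" "definable (restr N M) M n (Dset M N n F \<psi>)"
  have "Dset M N n F (PAnd \<phi> \<psi>) = Dset M N n F \<phi> \<inter> Dset M N n F \<psi>"
    by (auto simp: Dset_def)
  then show ?thesis using definable_inter[OF a] by simp
qed

lemma atom_def:
  assumes "tvars sx \<subseteq> {..<n}" "a \<in> M" "\<And>e u. sat N {} e (G u) = R (teval N e u)" "\<And>u. pure (G u)"
    "\<And>u. fv (G u) \<subseteq> tvars u"
  shows "definable (restr N M) M n {xs. length xs = n \<and> set xs \<subseteq> M \<and> R (padd N (teval N (env n F xs) sx) a)}"
proof -
  have te: "teval N (\<lambda>i. (xs @ [a]) ! i) sx = teval N (env n F xs) sx" if "length xs = n" for xs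
    by (rule teval_cong) (use assms(1) that in \<open>auto simp: env_def nth_append\<close>)
  have "{xs. length xs = n \<and> set xs \<subseteq> M \<and> R (padd N (teval N (env n F xs) sx) a)} =
     {xs. length xs = n \<and> set xs \<subseteq> M \<and> sat N {} (\<lambda>i. (xs @ [a]) ! i) (G (PAdd sx (PVar n)))}"
    using te by (auto simp: assms(3) nth_append)
  moreover have "fv (G (PAdd sx (PVar n))) \<subseteq> {..<n + length [a]}"
    using assms(5)[of "PAdd sx (PVar n)"] assms(1) by auto
  then have "definable (restr N M) M n {xs. length xs = n \<and> set xs \<subseteq> M \<and> sat N {} (\<lambda>i. (xs @ [a]) ! i) (G (PAdd sx (PVar n)))}"
    by (intro defN) (use assms(2,4) in auto)
  ultimately show ?thesis by simp
qed

end



context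
  fixes M :: "'a set" and N :: "'a pstruct"
  assumes pp: "presburger_pair M N" and ee: "end_extension M N"
begin

lemma ee': "y \<in> pdom N \<Longrightarrow> y \<notin> M \<Longrightarrow> (\<forall>m\<in>M. pless N m y) \<or> (\<forall>m\<in>M. pless N y m)"
  using ee by (auto simp: end_extension_def)

lemma neg_notin: assumes "bb \<in> pdom N" "bb \<notin> M" shows "pneg N bb \<notin> M"
proof
  assume "pneg N bb \<in> M"
  then have "pneg N (pneg N bb) \<in> M" by (rule M_neg[OF pp])
  then show False using law_negneg[OF PN[OF pp]] assms by simp
qed

lemma lt_const: assumes "bb \<in> pdom N" "bb \<notin> M"
  shows "\<exists>c. \<forall>s\<in>M. pless N (padd N s bb) (pzero N) = c"
proof -
  have nd: "pneg N bb \<in> pdom N" using struct_simps(4)[OF SN[OF pp] assms(1)] .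
  have eqv: "pless N (padd N s bb) (pzero N) = pless N s (pneg N bb)" if "s \<in> M" for s
    using law_lt[OF PN[OF pp]] that MN[OF pp] assms(1) by blast
  from ee'[OF nd neg_notin[OF assms]] show ?thesis
  proof
    assume "\<forall>m\<in>M. pless N m (pneg N bb)"
    then show ?thesis using eqv by (intro exI[of _ True]) auto
  next
    assume h: "\<forall>m\<in>M. pless N (pneg N bb) m"
    have "\<not> pless N s (pneg N bb)" if "s \<in> M" for s
      using law_asym[OF PN[OF pp]] h that MN[OF pp] nd by blast
    then show ?thesis using eqv by (intro exI[of _ False]) auto
  qed
qed

lemma gt_const: assumes "bb \<in> pdom N" "bb \<notin> M"
  shows "\<exists>c. \<forall>s\<in>M. pless N (pzero N) (padd N s bb) = c"
proof -
  have nd: "pneg N bb \<in> pdom N" using struct_simps(4)[OF SN[OF pp] assms(1)] .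
  have eqv: "pless N (pzero N) (padd N s bb) = pless N (pneg N bb) s" if "s \<in> M" for s
    using law_gt[OF PN[OF pp]] that MN[OF pp] assms(1) by blast
  from ee'[OF nd neg_notin[OF assms]] show ?thesis
  proof
    assume h: "\<forall>m\<in>M. pless N m (pneg N bb)"
    have "\<not> pless N (pneg N bb) s" if "s \<in> M" for s
      using law_asym[OF PN[OF pp]] h that MN[OF pp] nd by blast
    then show ?thesis using eqv by (intro exI[of _ False]) auto
  next
    assume "\<forall>m\<in>M. pless N (pneg N bb) m"
    then show ?thesis using eqv by (intro exI[of _ True]) auto
  qed
qed

lemma eq_const: assumes "bb \<in> pdom N" "bb \<notin> M" "s \<in> M"
  shows "padd N s bb \<noteq> pzero N"
proof
  assume "padd N s bb = pzero N"
  then have "bb = pneg N s" using law_sum0[OF PN[OF pp]] assms(1,3) MN[OF pp] by blast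
  then show False using M_neg[OF pp assms(3)] assms(2) by simp
qed

lemma mod_rep: assumes "0 < k" "bb \<in> pdom N"
  shows "\<exists>a\<in>M. \<forall>s\<in>pdom N. (\<exists>y\<in>pdom N. nsmul N k y = padd N s bb) = (\<exists>y\<in>pdom N. nsmul N k y = padd N s a)"
proof -
  obtain a where a: "a \<in> pdom N" "\<not> pless N a (pzero N)" "pless N a (nsmul N k (pone N))"
    "\<forall>s\<in>pdom N. (\<exists>y\<in>pdom N. nsmul N k y = padd N s bb) = (\<exists>y\<in>pdom N. nsmul N k y = padd N s a)"
    using law_mod[OF PN[OF pp] assms(1)] assms(2) by blast
  have km: "nsmul N k (pone N) \<in> M" using nsmul_M[OF pp M_one[OF pp]] .
  have "a \<in> M"
  proof (rule ccontr)
    assume "a \<notin> M"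
    from ee'[OF a(1) this] show False
    proof
      assume "\<forall>m\<in>M. pless N m a"
      then have "pless N (nsmul N k (pone N)) a" using km by blast
      then show False using law_asym[OF PN[OF pp]] a(1,3) km MN[OF pp] by blast
    next
      assume "\<forall>m\<in>M. pless N a m"
      then show False using a(2) M_zero[OF pp] by blast
    qed
  qed
  then show ?thesis using a(4) by blast
qed

context
  fixes n :: nat and F :: "nat \<Rightarrow> 'a"
  assumes Fdom: "range F \<subseteq> pdom N"
begin

lemma sp_eval: "teval N (env n F xs) (sp n t) = padd N (teval N (env n F xs) (bx n t)) (teval N F (bp n t))"
proof -
  have "teval N (env n F xs) (bp n t) = teval N F (bp n t)"
    by (rule teval_cong) (use tvars_bp[of n t] in \<open>auto simp: env_def\<close>)
  then show ?thesis by (simp add: sp_def)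
qed

lemma bx_M: assumes "length xs = n" "set xs \<subseteq> M" shows "teval N (env n F xs) (bx n t) \<in> M"
proof -
  have "teval N (env n F xs) (bx n t) = teval N (\<lambda>j. if j < n then xs ! j else pzero N) (bx n t)"
    by (rule teval_cong) (use tvars_bx[of n t] in \<open>auto simp: env_def\<close>)
  moreover have "range (\<lambda>j. if j < n then xs ! j else pzero N) \<subseteq> M"
    using assms M_zero[OF pp] nth_mem by fastforce
  ultimately show ?thesis using teval_M[OF pp] by simp
qed

lemma bp_dom: "teval N F (bp n t) \<in> pdom N"
  using teval_in[OF SN[OF pp] Fdom] .

lemma atom_case:
  assumes G: "\<And>e u. sat N {} e (G u) = R (teval N e u)" "\<And>u. pure (G u)" "\<And>u. fv (G u) \<subseteq> tvars u"
    and alt: "(\<exists>a\<in>M. \<forall>s\<in>M. R (padd N s (teval N F (bp n t))) = R (padd N s a)) \<or>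
              (\<exists>c. \<forall>s\<in>M. R (padd N s (teval N F (bp n t))) = c)"
  shows "definable (restr N M) M n (Dset M N n F (G (sp n t)))"
proof -
  let ?bb = "teval N F (bp n t)"
  have D: "Dset M N n F (G (sp n t)) = {xs. length xs = n \<and> set xs \<subseteq> M \<and> R (padd N (teval N (env n F xs) (bx n t)) ?bb)}"
    by (auto simp: Dset_def G(1) sp_eval)
  from alt show ?thesis
  proof
    assume "\<exists>a\<in>M. \<forall>s\<in>M. R (padd N s ?bb) = R (padd N s a)"
    then obtain a where a: "a \<in> M" "\<forall>s\<in>M. R (padd N s ?bb) = R (padd N s a)" by blast
    have "Dset M N n F (G (sp n t)) = {xs. length xs = n \<and> set xs \<subseteq> M \<and> R (padd N (teval N (env n F xs) (bx n t)) a)}"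
      unfolding D using a(2) bx_M by auto
    moreover have "definable (restr N M) M n {xs. length xs = n \<and> set xs \<subseteq> M \<and> R (padd N (teval N (env n F xs) (bx n t)) a)}"
      by (rule atom_def[OF pp tvars_bx a(1) G])
    ultimately show ?thesis by simp
  next
    assume "\<exists>c. \<forall>s\<in>M. R (padd N s ?bb) = c"
    then obtain c where c: "\<forall>s\<in>M. R (padd N s ?bb) = c" by blast
    have "Dset M N n F (G (sp n t)) = {xs. length xs = n \<and> set xs \<subseteq> M \<and> c}"
      unfolding D using c bx_M by auto
    then show ?thesis using const_def[OF pp] by simp
  qed
qed

lemma D_lt: "definable (restr N M) M n (Dset M N n F (PLess (sp n t) PZero))"
proof (rule atom_case[where G = "\<lambda>u. PLess u PZero" and R = "\<lambda>v. pless N v (pzero N)"])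
  show "(\<exists>a\<in>M. \<forall>s\<in>M. pless N (padd N s (teval N F (bp n t))) (pzero N) = pless N (padd N s a) (pzero N)) \<or>
    (\<exists>c. \<forall>s\<in>M. pless N (padd N s (teval N F (bp n t))) (pzero N) = c)"
  proof (cases "teval N F (bp n t) \<in> M")
    case True then show ?thesis by (intro disjI1 bexI[of _ "teval N F (bp n t)"]) auto
  next
    case False then show ?thesis using lt_const[OF bp_dom False] by (intro disjI2)
  qed
qed auto

lemma D_gt: "definable (restr N M) M n (Dset M N n F (PLess PZero (sp n t)))"
proof (rule atom_case[where G = "\<lambda>u. PLess PZero u" and R = "\<lambda>v. pless N (pzero N) v"])
  show "(\<exists>a\<in>M. \<forall>s\<in>M. pless N (pzero N) (padd N s (teval N F (bp n t))) = pless N (pzero N) (padd N s a)) \<or>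
    (\<exists>c. \<forall>s\<in>M. pless N (pzero N) (padd N s (teval N F (bp n t))) = c)"
  proof (cases "teval N F (bp n t) \<in> M")
    case True then show ?thesis by (intro disjI1 bexI[of _ "teval N F (bp n t)"]) auto
  next
    case False then show ?thesis using gt_const[OF bp_dom False] by (intro disjI2)
  qed
qed auto

lemma D_eq: "definable (restr N M) M n (Dset M N n F (PEq (sp n t) PZero))"
proof (rule atom_case[where G = "\<lambda>u. PEq u PZero" and R = "\<lambda>v. v = pzero N"])
  show "(\<exists>a\<in>M. \<forall>s\<in>M. (padd N s (teval N F (bp n t)) = pzero N) = (padd N s a = pzero N)) \<or>
    (\<exists>c. \<forall>s\<in>M. (padd N s (teval N F (bp n t)) = pzero N) = c)"
  proof (cases "teval N F (bp n t) \<in> M")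
    case True then show ?thesis by (intro disjI1 bexI[of _ "teval N F (bp n t)"]) auto
  next
    case False then show ?thesis using eq_const[OF bp_dom False] by (intro disjI2 exI[of _ False]) auto
  qed
qed auto

lemma D_dvdf: assumes "0 < k" shows "definable (restr N M) M n (Dset M N n F (dvdf k (sp n t)))"
proof (rule atom_case[where G = "dvdf k" and R = "\<lambda>v. \<exists>y\<in>pdom N. nsmul N k y = v"])
  show "(\<exists>a\<in>M. \<forall>s\<in>M. (\<exists>y\<in>pdom N. nsmul N k y = padd N s (teval N F (bp n t))) = (\<exists>y\<in>pdom N. nsmul N k y = padd N s a)) \<or>
    (\<exists>c. \<forall>s\<in>M. (\<exists>y\<in>pdom N. nsmul N k y = padd N s (teval N F (bp n t))) = c)"
  proof (rule disjI1)
    obtain a where "a \<in> M" "\<forall>s\<in>pdom N. (\<exists>y\<in>pdom N. nsmul N k y = padd N s (teval N F (bp n t))) = (\<exists>y\<in>pdom N. nsmul N k y = padd N s a)"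
      using mod_rep[OF assms bp_dom] by blast
    then show "\<exists>a\<in>M. \<forall>s\<in>M. (\<exists>y\<in>pdom N. nsmul N k y = padd N s (teval N F (bp n t))) = (\<exists>y\<in>pdom N. nsmul N k y = padd N s a)"
      using MN[OF pp] by blast
  qed
qed (auto simp: sat_dvdf pure_dvdf fv_dvdf)

lemma D_pdvd: "definable (restr N M) M n (Dset M N n F (pdvd n i t))"
  using D_eq D_dvdf[of "nat \<bar>i\<bar>"] by (simp add: pdvd_def)

lemma D_true: "definable (restr N M) M n (Dset M N n F ptrue)"
proof -
  have "Dset M N n F ptrue = {xs. length xs = n \<and> set xs \<subseteq> M \<and> True}" by (simp add: Dset_def)
  then show ?thesis using const_def[OF pp, of n True] by simp
qed



lemma stepC: "qfree p \<Longrightarrow> definable (restr N M) M n (Dset M N n F (backf n p))"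
  by (induction p) (simp_all add: PImp_def D_true D_lt D_gt D_eq D_pdvd Dnot[OF pp] Dand[OF pp])

end

end



lemma ee_stable:
  assumes pp: "presburger_pair M N" and ee: "end_extension M N"
  shows "stably_embedded M N"
  unfolding stably_embedded_def
proof (intro allI impI)
  fix n X
  assume "definable N (pdom N) n X"
  then obtain \<phi> ps where h: "pure \<phi>" "set ps \<subseteq> pdom N" "fv \<phi> \<subseteq> {..<n + length ps}"
    "X = {xs. length xs = n \<and> set xs \<subseteq> pdom N \<and> sat N {} (\<lambda>i. (xs @ ps) ! i) \<phi>}"
    unfolding definable_def by blast
  define k where "k = length ps"
  define \<psi> where "\<psi> = pa (trf id \<phi>)"
  have qf: "qfree \<psi>" using mirqe by (simp add: \<psi>_def)
  have Ifm: "Ifm [] bs \<psi> = sat Zstruct {} (\<lambda>j. bs ! j) \<phi>" for bs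
    using mirqe Ifm_trf[OF h(1), of "[]" bs id] by (simp add: \<psi>_def)
  define \<theta> where "\<theta> = backf n \<psi>"
  define L where "L = Suc (Max (insert (n + k) (fv \<theta>)))"
  have fin: "finite (insert (n + k) (fv \<theta>))" using finite_fv by simp
  have fvt: "fv \<theta> \<subseteq> {..<L}"
  proof
    fix j assume "j \<in> fv \<theta>"
    then have "j \<le> Max (insert (n + k) (fv \<theta>))" using fin by (intro Max_ge) auto
    then show "j \<in> {..<L}" by (simp add: L_def)
  qed
  have nk: "n + k < L" using fin by (simp add: L_def le_imp_less_Suc)
  have Zeq: "\<forall>e. sat Zstruct {} e (PIff \<phi> \<theta>)"
  proof
    fix e :: "nat \<Rightarrow> int"
    define bs where "bs = map e [0..<L]"
    have 1: "sat Zstruct {} e \<theta> = sat Zstruct {} (\<lambda>j. bs ! j) \<theta>"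
      by (rule sat_cong) (use fvt in \<open>auto simp: bs_def\<close>)
    have 2: "sat Zstruct {} (\<lambda>j. bs ! j) \<theta> = Ifm [] bs \<psi>"
      unfolding \<theta>_def by (rule backf_Z[OF qf])
    have 4: "sat Zstruct {} (\<lambda>j. bs ! j) \<phi> = sat Zstruct {} e \<phi>"
      by (rule sat_cong) (use h(3) nk in \<open>auto simp: bs_def k_def\<close>)
    show "sat Zstruct {} e (PIff \<phi> \<theta>)" using 1 2 4 Ifm by simp
  qed
  have pt: "pure (PIff \<phi> \<theta>)" using h(1) pure_backf by (simp add: \<theta>_def)
  have Neq: "sat N {} e \<phi> = sat N {} e \<theta>" if "range e \<subseteq> pdom N" for e
    using transfer[OF PN[OF pp] pt Zeq that] by simp
  define F where "F j = (if n \<le> j \<and> j < n + k then ps ! (j - n) else pzero N)" for j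
  have Fdom: "range F \<subseteq> pdom N"
  proof
    fix z assume "z \<in> range F"
    then obtain j where j: "z = F j" by auto
    show "z \<in> pdom N"
    proof (cases "n \<le> j \<and> j < n + k")
      case True
      then have "ps ! (j - n) \<in> set ps" by (intro nth_mem) (auto simp: k_def)
      then show ?thesis using j True h(2) by (auto simp: F_def)
    next
      case False then show ?thesis using j struct_simps(1)[OF SN[OF pp]] by (auto simp: F_def)
    qed
  qed
  have "{xs \<in> X. set xs \<subseteq> M} = Dset M N n F \<theta>"
  proof -
    have "sat N {} (\<lambda>i. (xs @ ps) ! i) \<phi> = sat N {} (env n F xs) \<theta>"
      if xs: "length xs = n" "set xs \<subseteq> M" for xs
    proof -
      have "sat N {} (\<lambda>i. (xs @ ps) ! i) \<phi> = sat N {} (env n F xs) \<phi>"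
        by (rule sat_cong) (use h(3) xs in \<open>auto simp: env_def F_def nth_append k_def\<close>)
      moreover have "range (env n F xs) \<subseteq> pdom N"
      proof
        fix z assume "z \<in> range (env n F xs)"
        then obtain j where j: "z = env n F xs j" by auto
        show "z \<in> pdom N"
        proof (cases "j < n")
          case True
          then have "xs ! j \<in> set xs" using xs(1) by (intro nth_mem) simp
          then show ?thesis using j True xs(2) MN[OF pp] by (auto simp: env_def)
        next
          case False then show ?thesis using j Fdom by (auto simp: env_def)
        qed
      qed
      ultimately show ?thesis using Neq by simp
    qed
    then show ?thesis unfolding h(4) Dset_def using MN[OF pp] by auto
  qed
  then show "definable (restr N M) M n {xs \<in> X. set xs \<subseteq> M}"
    using stepC[OF pp ee Fdom qf] by (simp add: \<theta>_def)
qed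



definition swp :: "nat \<Rightarrow> nat \<Rightarrow> nat" where
  "swp w j = (if j = 0 then w else if j = w then 0 else j)"

definition MaxF :: "pfm \<Rightarrow> nat \<Rightarrow> nat \<Rightarrow> pfm" where
  "MaxF \<chi> w b = PImp (PAnd (PEx 0 \<chi>) (PEx b (PAll 0 (PImp \<chi> (PLess (PVar 0) (PVar b))))))
     (PEx 0 (PAnd \<chi> (PAll w (PImp (rfm (swp w) \<chi>) (PNot (PLess (PVar 0) (PVar w)))))))"

lemma maxlaw_sem:
  assumes "w \<notin> fv \<chi>" "b \<notin> fv \<chi>" "w \<noteq> 0" "b \<noteq> 0"
  shows "sat S P e (MaxF \<chi> w b) =
    ((\<exists>x\<in>pdom S. sat S P (e(0:=x)) \<chi>) \<and> (\<exists>B\<in>pdom S. \<forall>x\<in>pdom S. sat S P (e(0:=x)) \<chi> \<longrightarrow> pless S x B) \<longrightarrow>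
     (\<exists>x\<in>pdom S. sat S P (e(0:=x)) \<chi> \<and> (\<forall>x'\<in>pdom S. sat S P (e(0:=x')) \<chi> \<longrightarrow> \<not> pless S x x')))"
proof -
  have inj: "inj (swp w)" by (auto simp: inj_def swp_def split: if_splits)
  have a: "sat S P (e(b:=B, 0:=x)) \<chi> = sat S P (e(0:=x)) \<chi>" for B x
    by (rule sat_cong) (use assms(2) in auto)
  have c: "sat S P (e(0:=x, w:=x')) (rfm (swp w) \<chi>) = sat S P (e(0:=x')) \<chi>" for x x'
    unfolding sat_rfm[OF inj] by (rule sat_cong) (use assms(1,3) in \<open>auto simp: swp_def\<close>)
  have d: "sat S P (e(0:=x, w:=x')) \<chi> = sat S P (e(0:=x)) \<chi>" for x x'
    by (rule sat_cong) (use assms(1) in auto)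
  show ?thesis using assms(3,4) by (simp add: MaxF_def a c d)
qed

lemma int_max:
  assumes "(x0::int) \<in> A" "\<forall>x\<in>A. x < B"
  shows "\<exists>x\<in>A. \<forall>x'\<in>A. \<not> x < x'"
proof -
  let ?A = "{x\<in>A. x0 \<le> x}"
  have fin: "finite ?A" by (rule finite_subset[of _ "{x0..B}"]) (use assms(2) in \<open>auto simp: less_imp_le\<close>)
  have ne: "x0 \<in> ?A" using assms(1) by simp
  have "Max ?A \<in> ?A" using fin ne by (intro Max_in) auto
  moreover have "\<not> Max ?A < x'" if "x' \<in> A" for x'
  proof
    assume h: "Max ?A < x'"
    have "x0 \<le> Max ?A" using fin ne by (intro Max_ge)
    then have "x' \<in> ?A" using h that by simp
    then have "x' \<le> Max ?A" using fin by (intro Max_ge)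
    then show False using h by simp
  qed
  ultimately show ?thesis by blast
qed

lemma stable_ee:
  assumes pp: "presburger_pair M N" and se: "stably_embedded M N"
  shows "end_extension M N"
proof (rule ccontr)
  assume "\<not> end_extension M N"
  then obtain y where y: "y \<in> pdom N" "y \<notin> M" "\<not> (\<forall>m\<in>M. pless N m y)" "\<not> (\<forall>m\<in>M. pless N y m)"
    unfolding end_extension_def by blast
  then obtain m1 m2 where m: "m1 \<in> M" "\<not> pless N m1 y" "m2 \<in> M" "\<not> pless N y m2" by blast
  have MN': "M \<subseteq> pdom N" using MN[OF pp] .
  have ym1: "pless N y m1"
  proof -
    have "pless N m1 y \<or> m1 = y \<or> pless N y m1" using law_trich[OF PN[OF pp]] y(1) m(1) MN' by blast
    then show ?thesis using m(1,2) y(2) by blast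
  qed
  have m2y: "pless N m2 y"
  proof -
    have "pless N m2 y \<or> m2 = y \<or> pless N y m2" using law_trich[OF PN[OF pp]] y(1) m(3) MN' by blast
    then show ?thesis using m(3,4) y(2) by blast
  qed
  define X where "X = {xs. length xs = 1 \<and> set xs \<subseteq> pdom N \<and> sat N {} (\<lambda>i. (xs @ [y]) ! i) (PLess (PVar 0) (PVar 1))}"
  have "definable N (pdom N) 1 X" unfolding definable_def X_def
    by (intro exI[of _ "PLess (PVar 0) (PVar 1)"] exI[of _ "[y]"]) (use y(1) in auto)
  then have "definable (restr N M) M 1 {xs \<in> X. set xs \<subseteq> M}" using se unfolding stably_embedded_def by blast
  then obtain \<chi> qs where c: "pure \<chi>" "set qs \<subseteq> M" "fv \<chi> \<subseteq> {..<1 + length qs}"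
    "{xs \<in> X. set xs \<subseteq> M} = {xs. length xs = 1 \<and> set xs \<subseteq> M \<and> sat (restr N M) {} (\<lambda>i. (xs @ qs) ! i) \<chi>}"
    unfolding definable_def restr_simps by blast
  have key: "sat (restr N M) {} (\<lambda>i. ([x] @ qs) ! i) \<chi> = pless N x y" if "x \<in> M" for x
  proof -
    have 1: "[x] \<in> {xs \<in> X. set xs \<subseteq> M} \<longleftrightarrow> pless N x y" using that MN' by (auto simp: X_def)
    have 2: "[x] \<in> {xs \<in> X. set xs \<subseteq> M} \<longleftrightarrow> sat (restr N M) {} (\<lambda>i. ([x] @ qs) ! i) \<chi>"
      unfolding c(4) using that by simp
    show ?thesis using 1 2 by simp
  qed
  define K where "K = 1 + length qs"
  have wfv: "K \<notin> fv \<chi>" "Suc K \<notin> fv \<chi>" "K \<noteq> 0" "Suc K \<noteq> 0" using c(3) by (auto simp: K_def)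
  have Zv: "\<forall>e. sat Zstruct {} e (MaxF \<chi> K (Suc K))"
  proof
    fix e :: "nat \<Rightarrow> int"
    show "sat Zstruct {} e (MaxF \<chi> K (Suc K))"
      unfolding maxlaw_sem[OF wfv] Z_simps
    proof (intro impI)
      assume h: "(\<exists>x\<in>UNIV. sat Zstruct {} (e(0 := x)) \<chi>) \<and>
        (\<exists>B\<in>UNIV. \<forall>x\<in>UNIV. sat Zstruct {} (e(0 := x)) \<chi> \<longrightarrow> x < B)"
      then obtain x0 B where x0: "x0 \<in> {x. sat Zstruct {} (e(0 := x)) \<chi>}"
        and B: "\<forall>x\<in>{x. sat Zstruct {} (e(0 := x)) \<chi>}. x < B" by auto
      from int_max[OF x0 B] show "\<exists>x\<in>UNIV. sat Zstruct {} (e(0 := x)) \<chi> \<and>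
        (\<forall>x'\<in>UNIV. sat Zstruct {} (e(0 := x')) \<chi> \<longrightarrow> \<not> x < x')" by auto
    qed
  qed
  have pmx: "pure (MaxF \<chi> K (Suc K))" using c(1) by (simp add: MaxF_def pure_rfm)
  define e0 where "e0 j = (if j < K then (m2 # qs) ! j else m2)" for j
  have e0r: "range e0 \<subseteq> M"
  proof
    fix z assume "z \<in> range e0"
    then obtain j where j: "z = e0 j" by auto
    show "z \<in> M"
    proof (cases "j < K")
      case True
      then have "(m2 # qs) ! j \<in> set (m2 # qs)" by (intro nth_mem) (simp add: K_def)
      then show ?thesis using j True c(2) m(3) by (auto simp: e0_def)
    next
      case False then show ?thesis using j m(3) by (auto simp: e0_def)
    qed
  qed
  have A: "sat (restr N M) {} (e0(0:=x)) \<chi> = pless N x y" if "x \<in> M" for x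
  proof -
    have "sat (restr N M) {} (e0(0:=x)) \<chi> = sat (restr N M) {} (\<lambda>i. ([x] @ qs) ! i) \<chi>"
      by (rule sat_cong) (use c(3) in \<open>auto simp: e0_def K_def nth_Cons'\<close>)
    then show ?thesis using key[OF that] by simp
  qed
  have "sat (restr N M) {} e0 (MaxF \<chi> K (Suc K))"
    by (rule transfer[OF PM[OF pp] pmx Zv]) (use e0r in simp)
  then have maxh: "(\<exists>x\<in>M. pless N x y) \<and> (\<exists>B\<in>M. \<forall>x\<in>M. pless N x y \<longrightarrow> pless N x B) \<longrightarrow>
     (\<exists>x\<in>M. pless N x y \<and> (\<forall>x'\<in>M. pless N x' y \<longrightarrow> \<not> pless N x x'))"
    unfolding maxlaw_sem[OF wfv] using A by simp
  have bnd: "\<forall>x\<in>M. pless N x y \<longrightarrow> pless N x m1"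
    using law_trans[OF PN[OF pp]] ym1 y(1) m(1) MN' by blast
  obtain d where d: "d \<in> M" "pless N d y" "\<forall>x'\<in>M. pless N x' y \<longrightarrow> \<not> pless N d x'"
    using maxh m(1,3) m2y bnd by blast
  have d1: "padd N d (pone N) \<in> M" using M_add[OF pp d(1) M_one[OF pp]] .
  have "pless N (padd N d (pone N)) y \<or> padd N d (pone N) = y"
    using law_discr[OF PN[OF pp]] d(1,2) y(1) MN' by blast
  then have "pless N (padd N d (pone N)) y" using d1 y(2) by auto
  then have "\<not> pless N d (padd N d (pone N))" using d(3) d1 by blast
  then show False using law_succ[OF PN[OF pp]] d(1) MN' by blast
qed

definition sigma :: pfm where
  "sigma = PAll 0 (PImp (PNot (PP (PVar 0))) (PNot (PAnd (PNot (PAll 1 (PImp (PP (PVar 1)) (PLess (PVar 1) (PVar 0)))))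
      (PNot (PAll 1 (PImp (PP (PVar 1)) (PLess (PVar 0) (PVar 1))))))))"

lemma fv_sigma: "fv sigma = {}" by (auto simp: sigma_def)

lemma sat_sigma: assumes "M \<subseteq> pdom N" shows "sat N M e sigma = end_extension M N"
proof -
  have "sat N M e sigma = (\<forall>x\<in>pdom N. x \<notin> M \<longrightarrow> (\<forall>m\<in>pdom N. m \<in> M \<longrightarrow> pless N m x) \<or> (\<forall>m\<in>pdom N. m \<in> M \<longrightarrow> pless N x m))"
    by (simp add: sigma_def)
  also have "\<dots> = end_extension M N" unfolding end_extension_def using assms by blast
  finally show ?thesis .
qed

theorem corollary5p7:
  shows "(\<forall>(M :: 'a set) N. presburger_pair M N \<longrightarrow>
            (stably_embedded M N \<longleftrightarrow> end_extension M N))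
       \<and> (\<exists>T :: pfm set. (\<forall>\<phi>\<in>T. fv \<phi> = {}) \<and>
            (\<forall>(M :: 'a set) N. presburger_pair M N \<longrightarrow>
               (stably_embedded M N \<longleftrightarrow>
                  (\<forall>\<phi>\<in>T. \<forall>e. range e \<subseteq> pdom N \<longrightarrow> sat N M e \<phi>))))"
proof (rule conjI)
  show c1: "\<forall>(M :: 'a set) N. presburger_pair M N \<longrightarrow> (stably_embedded M N \<longleftrightarrow> end_extension M N)"
    using ee_stable stable_ee by blast
  show "\<exists>T :: pfm set. (\<forall>\<phi>\<in>T. fv \<phi> = {}) \<and>
            (\<forall>(M :: 'a set) N. presburger_pair M N \<longrightarrow>
               (stably_embedded M N \<longleftrightarrow>
                  (\<forall>\<phi>\<in>T. \<forall>e. range e \<subseteq> pdom N \<longrightarrow> sat N M e \<phi>)))"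
  proof (intro exI[of _ "{sigma}"] conjI allI impI)
    show "\<forall>\<phi>\<in>{sigma}. fv \<phi> = {}" using fv_sigma by simp
  next
    fix M :: "'a set" and N
    assume pp: "presburger_pair M N"
    have MN': "M \<subseteq> pdom N" using MN[OF pp] .
    have z: "range (\<lambda>_. pzero N) \<subseteq> pdom N" using struct_simps(1)[OF SN[OF pp]] by auto
    have "(\<forall>\<phi>\<in>{sigma}. \<forall>e. range e \<subseteq> pdom N \<longrightarrow> sat N M e \<phi>) = end_extension M N"
    proof
      assume "\<forall>\<phi>\<in>{sigma}. \<forall>e. range e \<subseteq> pdom N \<longrightarrow> sat N M e \<phi>"
      then have "sat N M (\<lambda>_. pzero N) sigma" using z by blast
      then show "end_extension M N" using sat_sigma[OF MN'] by simp
    next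
      assume "end_extension M N"
      then show "\<forall>\<phi>\<in>{sigma}. \<forall>e. range e \<subseteq> pdom N \<longrightarrow> sat N M e \<phi>"
        using sat_sigma[OF MN'] by simp
    qed
    then show "stably_embedded M N = (\<forall>\<phi>\<in>{sigma}. \<forall>e. range e \<subseteq> pdom N \<longrightarrow> sat N M e \<phi>)"
      using c1 pp by blast
  qed
qed

end
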